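(* Let $(A,\mathfrak m)$ be a local ring and $I$ a proper ideal of $A$. Then $A \bowtie I$ is a Prüfer ring if and only if $A$ is a Prüfer ring and $I = aI$ for all $a \in \mathfrak m \setminus Z(A)$.
   Context: All rings are commutative with identity. For an ideal $I$ of a ring $A$, the amalgamated duplication of $A$ along $I$ is the subring $A \bowtie I := \{(a, a+i) : a \in A, i \in I\}$ of $A\times A$. $Z(A)$ is the set of zero-divisors of $A$. An ideal is regular if it contains a regular element (non-zero-divisor). A ring $R$ is a Prüfer ring if every finitely generated regular ideal of $R$ is invertible. *)

theory Defs
  imports "HOL-Algebra.Ideal"
begin

definition zero_divisors :: "('a, 'b) ring_scheme \<Rightarrow> 'a set" where
  "zero_divisors R = {a \<in> carrier R. \<exists>b \<in> carrier R. b \<noteq> \<zero>\<^bsub>R\<^esub> \<and> a \<otimes>\<^bsub>R\<^esub> b = \<zero>\<^bsub>R\<^esub>}"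

definition regular_elem :: "('a, 'b) ring_scheme \<Rightarrow> 'a \<Rightarrow> bool" where
  "regular_elem R a \<longleftrightarrow> a \<in> carrier R \<and> a \<notin> zero_divisors R"

definition regular_ideal :: "('a, 'b) ring_scheme \<Rightarrow> 'a set \<Rightarrow> bool" where
  "regular_ideal R J \<longleftrightarrow> (\<exists>a \<in> J. regular_elem R a)"

definition fin_gen_ideal :: "('a, 'b) ring_scheme \<Rightarrow> 'a set \<Rightarrow> bool" where
  "fin_gen_ideal R J \<longleftrightarrow> (\<exists>S. finite S \<and> S \<subseteq> carrier R \<and> J = Idl\<^bsub>R\<^esub> S)"

text \<open>Elements of the total ring of fractions Q(R) are represented by pairs (x, s)
  standing for x/s with s regular.  The set (R :_Q J) = {q \<in> Q(R). q J \<subseteq> R}: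
  (x,s) belongs to it iff for every j in J, j x / s lies in R, i.e. j x = r s for some r.\<close>
definition frac_colon :: "('a, 'b) ring_scheme \<Rightarrow> 'a set \<Rightarrow> ('a \<times> 'a) set" where
  "frac_colon R J = {(x, s). x \<in> carrier R \<and> regular_elem R s \<and>
     (\<forall>j \<in> J. \<exists>r \<in> carrier R. j \<otimes>\<^bsub>R\<^esub> x = r \<otimes>\<^bsub>R\<^esub> s)}"

text \<open>An ideal J is invertible iff J (R:J) = R in Q(R), i.e. 1 = \<Sum> j_k q_k with
  j_k \<in> J, q_k \<in> (R:J); here r k is the element j_k q_k of R.\<close>
definition invertible_ideal :: "('a, 'b) ring_scheme \<Rightarrow> 'a set \<Rightarrow> bool" where
  "invertible_ideal R J \<longleftrightarrow> ideal J R \<and>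
     (\<exists>(n::nat) j q r. (\<forall>k < n. j k \<in> J \<and> q k \<in> frac_colon R J \<and> r k \<in> carrier R \<and>
          j k \<otimes>\<^bsub>R\<^esub> fst (q k) = r k \<otimes>\<^bsub>R\<^esub> snd (q k))
        \<and> finsum R r {..<n} = \<one>\<^bsub>R\<^esub>)"

definition pruefer_ring :: "('a, 'b) ring_scheme \<Rightarrow> bool" where
  "pruefer_ring R \<longleftrightarrow> cring R \<and>
     (\<forall>J. ideal J R \<and> fin_gen_ideal R J \<and> regular_ideal R J \<longrightarrow> invertible_ideal R J)"

definition local_ring_max :: "('a, 'b) ring_scheme \<Rightarrow> 'a set \<Rightarrow> bool" where
  "local_ring_max A m \<longleftrightarrow> cring A \<and> maximalideal m A \<and>
     (\<forall>M. maximalideal M A \<longrightarrow> M = m)"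

definition amalg_dup :: "('a, 'b) ring_scheme \<Rightarrow> 'a set \<Rightarrow> ('a \<times> 'a) ring" where
  "amalg_dup A I =
     \<lparr>carrier = {(a, a \<oplus>\<^bsub>A\<^esub> i) | a i. a \<in> carrier A \<and> i \<in> I},
      mult = (\<lambda>x y. (fst x \<otimes>\<^bsub>A\<^esub> fst y, snd x \<otimes>\<^bsub>A\<^esub> snd y)),
      one = (\<one>\<^bsub>A\<^esub>, \<one>\<^bsub>A\<^esub>),
      zero = (\<zero>\<^bsub>A\<^esub>, \<zero>\<^bsub>A\<^esub>),
      add = (\<lambda>x y. (fst x \<oplus>\<^bsub>A\<^esub> fst y, snd x \<oplus>\<^bsub>A\<^esub> snd y))\<rparr>"

definition ideal_smult :: "('a, 'b) ring_scheme \<Rightarrow> 'a \<Rightarrow> 'a set \<Rightarrow> 'a set" where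
  "ideal_smult A a I = (\<lambda>i. a \<otimes>\<^bsub>A\<^esub> i) ` I"

end

theory Submission
  imports Defs
begin


lemma (in cring) idealI2:
  assumes "J \<subseteq> carrier R" "\<zero> \<in> J" "\<And>x y. x \<in> J \<Longrightarrow> y \<in> J \<Longrightarrow> x \<oplus> y \<in> J"
    "\<And>a x. a \<in> J \<Longrightarrow> x \<in> carrier R \<Longrightarrow> x \<otimes> a \<in> J"
  shows "ideal J R"
proof (rule idealI[OF ring_axioms])
  show "subgroup J (add_monoid R)"
  proof (rule subgroup.intro)
    fix x assume x: "x \<in> J"
    have "\<ominus> x = (\<ominus> \<one>) \<otimes> x" using x assms(1) by (simp add: l_minus subsetD)
    then show "inv\<^bsub>add_monoid R\<^esub> x \<in> J" using x assms by (simp add: a_inv_def[symmetric])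
  qed (use assms in auto)
next
  fix a x assume "a \<in> J" "x \<in> carrier R"
  then show "x \<otimes> a \<in> J" "a \<otimes> x \<in> J" using assms m_comm by (auto, metis subsetD)
qed

lemma regular_iff: "regular_elem R a \<longleftrightarrow> a \<in> carrier R \<and> (\<forall>b \<in> carrier R. a \<otimes>\<^bsub>R\<^esub> b = \<zero>\<^bsub>R\<^esub> \<longrightarrow> b = \<zero>\<^bsub>R\<^esub>)"
  unfolding regular_elem_def zero_divisors_def by auto

lemma (in cring) regular_cancel:
  assumes "regular_elem R s" "a \<in> carrier R" "b \<in> carrier R" "s \<otimes> a = s \<otimes> b"
  shows "a = b"
proof -
  have s: "s \<in> carrier R" using assms(1) by (simp add: regular_iff)
  have "s \<otimes> (a \<ominus> b) = s \<otimes> a \<ominus> s \<otimes> b" using assms s by algebra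
  also have "\<dots> = \<zero>" using assms s by (simp add: minus_eq r_neg)
  finally have "s \<otimes> (a \<ominus> b) = \<zero>" .
  moreover have "\<forall>b \<in> carrier R. s \<otimes> b = \<zero> \<longrightarrow> b = \<zero>" using assms(1) by (simp add: regular_iff)
  moreover have "a \<ominus> b \<in> carrier R" using assms by simp
  ultimately have "a \<ominus> b = \<zero>" by blast
  moreover have "a = (a \<ominus> b) \<oplus> b" using assms by algebra
  ultimately show ?thesis using assms by simp
qed

lemma (in cring) principal_invertible:
  assumes J: "ideal J R" and g: "g \<in> J" "regular_elem R g"
    and gen: "\<And>x. x \<in> J \<Longrightarrow> \<exists>y \<in> carrier R. x = g \<otimes> y"
  shows "invertible_ideal R J"
proof -
  have gc: "g \<in> carrier R" using g(2) by (simp add: regular_iff)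
  have "(\<one>, g) \<in> frac_colon R J"
    unfolding frac_colon_def using g gc gen J by (auto, metis ideal.Icarr m_comm r_one)
  moreover have "finsum R (\<lambda>_. \<one>) {..<(1::nat)} = \<one>"
    by (simp add: lessThan_Suc finsum_insert)
  ultimately show ?thesis unfolding invertible_ideal_def
    using J g gc
    by (intro conjI exI[of _ "1::nat"] exI[of _ "\<lambda>_. g"] exI[of _ "\<lambda>_. (\<one>, g)"] exI[of _ "\<lambda>_. \<one>"]) auto
qed

lemma (in cring) invertible_principal:
  assumes inv: "invertible_ideal R J"
    and loc: "\<And>f n. f \<in> {..<n} \<rightarrow> carrier R \<Longrightarrow> finsum R f {..<(n::nat)} = \<one> \<Longrightarrow> \<exists>k<n. f k \<in> Units R"
  shows "\<exists>g \<in> J. \<forall>x \<in> J. \<exists>y \<in> carrier R. x = g \<otimes> y"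
proof -
  have J: "ideal J R" using inv by (simp add: invertible_ideal_def)
  obtain n :: nat and j q r where HS: "(\<forall>k < n. j k \<in> J \<and> q k \<in> frac_colon R J \<and> r k \<in> carrier R \<and>
          j k \<otimes> fst (q k) = r k \<otimes> snd (q k)) \<and> finsum R r {..<n} = \<one>"
    using inv unfolding invertible_ideal_def by blast
  note H = conjunct1[OF HS] and S = conjunct2[OF HS]
  have "r \<in> {..<n} \<rightarrow> carrier R" using H by auto
  then obtain k where k: "k < n" "r k \<in> Units R" using loc[of r n] S by blast
  obtain x s where q: "q k = (x, s)" by (cases "q k") simp
  have "q k \<in> frac_colon R J" using H k by blast
  then have xs: "x \<in> carrier R" "regular_elem R s" "\<forall>j\<in>J. \<exists>r\<in>carrier R. j \<otimes> x = r \<otimes> s"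
    using q unfolding frac_colon_def by auto
  have sc: "s \<in> carrier R" using xs(2) by (simp add: regular_iff)
  have jk0: "j k \<in> J" "j k \<otimes> fst (q k) = r k \<otimes> snd (q k)" using H k by blast+
  then have jk: "j k \<in> J" "j k \<otimes> x = r k \<otimes> s" using q by simp_all
  have jc: "j k \<in> carrier R" using ideal.Icarr[OF J jk(1)] .
  have rk: "r k \<in> carrier R" "inv (r k) \<in> carrier R" "r k \<otimes> inv (r k) = \<one>" using k by auto
  show ?thesis
  proof (intro bexI[OF _ jk(1)] ballI)
    fix z assume z: "z \<in> J"
    have zc: "z \<in> carrier R" using ideal.Icarr[OF J z] .
    obtain t where t: "t \<in> carrier R" "z \<otimes> x = t \<otimes> s" using xs z by blast
    have "s \<otimes> (z \<otimes> r k) = s \<otimes> (j k \<otimes> t)"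
    proof -
      have "s \<otimes> (z \<otimes> r k) = z \<otimes> (r k \<otimes> s)" using sc zc rk by (simp add: m_ac)
      also have "\<dots> = z \<otimes> (j k \<otimes> x)" using jk by simp
      also have "\<dots> = j k \<otimes> (z \<otimes> x)" using zc jc xs by (simp add: m_ac)
      also have "\<dots> = s \<otimes> (j k \<otimes> t)" using t jc sc by (simp add: m_ac)
      finally show ?thesis .
    qed
    then have "z \<otimes> r k = j k \<otimes> t" using regular_cancel[OF xs(2)] zc rk jc t by auto
    have "z = z \<otimes> (r k \<otimes> inv (r k))" using zc rk by simp
    also have "\<dots> = (z \<otimes> r k) \<otimes> inv (r k)" using zc rk by (simp add: m_assoc)
    also have "\<dots> = j k \<otimes> (t \<otimes> inv (r k))" using \<open>z \<otimes> r k = j k \<otimes> t\<close> jc t rk by (simp add: m_assoc)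
    finally have "z = j k \<otimes> (t \<otimes> inv (r k))" .
    then show "\<exists>y\<in>carrier R. z = j k \<otimes> y" using t rk by auto
  qed
qed




lemma (in ring) finsum_in_ideal:
  assumes J: "ideal J R" and F: "finite F" and f: "f \<in> F \<rightarrow> J"
  shows "finsum R f F \<in> J"
  using F f
proof (induction F rule: finite_induct)
  case empty
  then show ?case using J by (simp add: additive_subgroup.zero_closed ideal.axioms(1))
next
  case (insert a F)
  have fc: "f \<in> F \<rightarrow> carrier R" "f a \<in> carrier R"
    using insert.prems ideal.Icarr[OF J] by auto
  have "finsum R f (insert a F) = f a \<oplus> finsum R f F"
    using insert fc by (simp add: finsum_insert)
  moreover have "f a \<in> J" "finsum R f F \<in> J" using insert by auto
  ultimately show ?case using J by (simp add: additive_subgroup.a_closed ideal.axioms(1))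
qed

locale loc = cring A for A (structure) + fixes m assumes lrm: "local_ring_max A m"
begin

lemma m_max: "maximalideal m A" using lrm unfolding local_ring_max_def by blast
lemma m_ideal: "ideal m A" using m_max maximalideal.axioms(1) by blast
lemma m_uniq: "maximalideal M A \<Longrightarrow> M = m" using lrm unfolding local_ring_max_def by blast

lemma one_notin_m: "\<one> \<notin> m"
proof
  assume "\<one> \<in> m"
  then have "m = carrier A" using ideal.one_imp_carrier[OF m_ideal] by blast
  then show False using maximalideal.I_notcarr[OF m_max] by simp
qed

lemma m_carrier: "x \<in> m \<Longrightarrow> x \<in> carrier A"
  using ideal.Icarr[OF m_ideal] .

lemma unit_notin_m:
  assumes "x \<in> Units A" shows "x \<notin> m"
proof
  assume xm: "x \<in> m"
  have "inv x \<otimes> x \<in> m" using ideal.I_l_closed[OF m_ideal xm Units_inv_closed[OF assms]] .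
  then show False using assms one_notin_m by simp
qed

lemma nonunit_in_m:
  assumes xc: "x \<in> carrier A" and xu: "x \<notin> Units A"
  shows "x \<in> m"
proof -
  define S where "S = {J. ideal J A \<and> x \<in> J \<and> \<one> \<notin> J}"
  have P0: "PIdl x \<in> S"
  proof -
    have "\<one> \<notin> PIdl x"
    proof
      assume "\<one> \<in> PIdl x"
      then obtain y where y: "y \<in> carrier A" "\<one> = y \<otimes> x" unfolding cgenideal_def by blast
      moreover have "x \<otimes> y = \<one>" using y xc m_comm by simp
      ultimately have "x \<in> Units A" using xc unfolding Units_def by auto
      then show False using xu by blast
    qed
    then show ?thesis unfolding S_def using cgenideal_ideal[OF xc] cgenideal_self[OF xc] by blast
  qed
  have "\<forall>C\<in>chains S. \<exists>U\<in>S. \<forall>X\<in>C. X \<subseteq> U"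
  proof
    fix C assume C: "C \<in> chains S"
    show "\<exists>U\<in>S. \<forall>X\<in>C. X \<subseteq> U"
    proof (cases "C = {}")
      case True then show ?thesis using P0 by blast
    next
      case False
      have CS: "C \<subseteq> S" using C chainsD2 by blast
      have ch: "\<And>X Y. X \<in> C \<Longrightarrow> Y \<in> C \<Longrightarrow> X \<subseteq> Y \<or> Y \<subseteq> X" using C chainsD by blast
      have idC: "\<And>X. X \<in> C \<Longrightarrow> ideal X A" using CS unfolding S_def by blast
      have "ideal (\<Union>C) A"
      proof (rule idealI2)
        show "\<Union>C \<subseteq> carrier A"
        proof
          fix y assume "y \<in> \<Union>C"
          then obtain X where X: "X \<in> C" "y \<in> X" by blast
          show "y \<in> carrier A" using ideal.Icarr[OF idC[OF X(1)] X(2)] .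
        qed
        obtain X where X: "X \<in> C" using False by blast
        then have "\<zero> \<in> X" using idC[OF X] by (simp add: additive_subgroup.zero_closed ideal.axioms(1))
        then show "\<zero> \<in> \<Union>C" using X by blast
      next
        fix a b assume "a \<in> \<Union>C" "b \<in> \<Union>C"
        then obtain X Y where XY: "X \<in> C" "Y \<in> C" "a \<in> X" "b \<in> Y" by blast
        show "a \<oplus> b \<in> \<Union>C"
        proof (cases "X \<subseteq> Y")
          case True
          then have "a \<oplus> b \<in> Y" using XY idC[OF XY(2)] by (simp add: additive_subgroup.a_closed ideal.axioms(1) subsetD)
          then show ?thesis using XY by blast
        next
          case False
          then have "Y \<subseteq> X" using ch XY by blast
          then have "a \<oplus> b \<in> X" using XY idC[OF XY(1)] by (simp add: additive_subgroup.a_closed ideal.axioms(1) subsetD)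
          then show ?thesis using XY by blast
        qed
      next
        fix a y assume "a \<in> \<Union>C" "y \<in> carrier A"
        then obtain X where X: "X \<in> C" "a \<in> X" by blast
        have "y \<otimes> a \<in> X" using ideal.I_l_closed[OF idC[OF X(1)] X(2) \<open>y \<in> carrier A\<close>] .
        then show "y \<otimes> a \<in> \<Union>C" using X by blast
      qed
      moreover have "x \<in> \<Union>C" "\<one> \<notin> \<Union>C" using CS False unfolding S_def by blast+
      ultimately show ?thesis unfolding S_def by blast
    qed
  qed
  from Zorn_Lemma2[OF this] obtain M where M: "M \<in> S" "\<forall>X\<in>S. M \<subseteq> X \<longrightarrow> X = M"
    by (elim bexE) (rule that)
  have "maximalideal M A"
  proof (rule maximalidealI)
    show "ideal M A" using M unfolding S_def by blast
    show "carrier A \<noteq> M" using M unfolding S_def by blast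
    fix J assume J: "ideal J A" "M \<subseteq> J" "J \<subseteq> carrier A"
    show "J = M \<or> J = carrier A"
    proof (cases "\<one> \<in> J")
      case True then show ?thesis using ideal.one_imp_carrier[OF J(1)] by blast
    next
      case False
      then have "J \<in> S" using J M unfolding S_def by blast
      then show ?thesis using M J by blast
    qed
  qed
  then have "M = m" by (rule m_uniq)
  then show ?thesis using M unfolding S_def by blast
qed

lemma notin_m_unit: "x \<in> carrier A \<Longrightarrow> x \<notin> m \<Longrightarrow> x \<in> Units A"
  using nonunit_in_m by blast

lemma one_minus_m_unit: assumes "y \<in> m" shows "\<one> \<ominus> y \<in> Units A"
proof (rule notin_m_unit)
  have yc: "y \<in> carrier A" using m_carrier assms .
  then show "\<one> \<ominus> y \<in> carrier A" by simp
  show "\<one> \<ominus> y \<notin> m"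
  proof
    assume "\<one> \<ominus> y \<in> m"
    then have "(\<one> \<ominus> y) \<oplus> y \<in> m" using assms m_ideal by (simp add: additive_subgroup.a_closed ideal.axioms(1))
    moreover have "(\<one> \<ominus> y) \<oplus> y = \<one>" using yc by algebra
    ultimately show False using one_notin_m by simp
  qed
qed

lemma local_finsum:
  assumes f: "f \<in> {..<n} \<rightarrow> carrier A" and S: "finsum A f {..<(n::nat)} = \<one>"
  shows "\<exists>k<n. f k \<in> Units A"
proof (rule ccontr)
  assume "\<not> (\<exists>k<n. f k \<in> Units A)"
  then have "f \<in> {..<n} \<rightarrow> m" using f nonunit_in_m by blast
  then have "finsum A f {..<n} \<in> m" using finsum_in_ideal[OF m_ideal] by blast
  then show False using S one_notin_m by simp
qed

lemma proper_ideal_sub_m: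
  assumes "ideal J A" "J \<noteq> carrier A" shows "J \<subseteq> m"
proof
  fix x assume x: "x \<in> J"
  have "x \<notin> Units A"
  proof
    assume "x \<in> Units A"
    then have "inv x \<otimes> x \<in> J" using ideal.I_l_closed[OF assms(1) x Units_inv_closed] by blast
    then have "\<one> \<in> J" using \<open>x \<in> Units A\<close> by simp
    then show False using ideal.one_imp_carrier[OF assms(1)] assms(2) by blast
  qed
  then show "x \<in> m" using nonunit_in_m[OF ideal.Icarr[OF assms(1) x]] by blast
qed

lemma pruefer_principal:
  assumes P: "pruefer_ring A" and J: "ideal J A" "fin_gen_ideal A J" "regular_ideal A J"
  shows "\<exists>g \<in> J. \<forall>x \<in> J. \<exists>y \<in> carrier A. x = g \<otimes> y"
  using P J invertible_principal local_finsum unfolding pruefer_ring_def by blast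

end



locale amal = cring A for A (structure) + fixes I assumes I_ideal: "ideal I A"
begin

abbreviation "R \<equiv> amalg_dup A I"

lemma I_sub: "I \<subseteq> carrier A"
  using I_ideal ideal.axioms(1) additive_subgroup.a_subset by blast

lemma R_simps [simp]:
  "x \<otimes>\<^bsub>R\<^esub> y = (fst x \<otimes> fst y, snd x \<otimes> snd y)"
  "x \<oplus>\<^bsub>R\<^esub> y = (fst x \<oplus> fst y, snd x \<oplus> snd y)"
  "\<one>\<^bsub>R\<^esub> = (\<one>, \<one>)" "\<zero>\<^bsub>R\<^esub> = (\<zero>, \<zero>)"
  by (simp_all add: amalg_dup_def)

lemma R_carrier: "x \<in> carrier R \<longleftrightarrow> fst x \<in> carrier A \<and> snd x \<in> carrier A \<and> snd x \<ominus> fst x \<in> I"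
proof
  assume "x \<in> carrier R"
  then obtain a i where x: "x = (a, a \<oplus> i)" "a \<in> carrier A" "i \<in> I"
    by (auto simp: amalg_dup_def)
  have i: "i \<in> carrier A" using x I_sub by auto
  have "a \<oplus> i \<ominus> a = i" using x i by algebra
  then show "fst x \<in> carrier A \<and> snd x \<in> carrier A \<and> snd x \<ominus> fst x \<in> I" using x i by auto
next
  assume h: "fst x \<in> carrier A \<and> snd x \<in> carrier A \<and> snd x \<ominus> fst x \<in> I"
  have "snd x = fst x \<oplus> (snd x \<ominus> fst x)" using h by algebra
  then have "x = (fst x, fst x \<oplus> (snd x \<ominus> fst x))" by (metis prod.collapse)
  then show "x \<in> carrier R" using h unfolding amalg_dup_def by auto
qed

lemma R_carrier_pair: "(a, b) \<in> carrier R \<longleftrightarrow> a \<in> carrier A \<and> b \<in> carrier A \<and> b \<ominus> a \<in> I"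
  using R_carrier[of "(a,b)"] by simp

lemma R_cring: "cring R"
proof (rule cringI)
  interpret I: ideal I A by (rule I_ideal)
  show "abelian_group R"
  proof (rule abelian_groupI)
    fix x y assume "x \<in> carrier R" "y \<in> carrier R"
    then show "x \<oplus>\<^bsub>R\<^esub> y \<in> carrier R" unfolding R_carrier
      apply simp
      apply (subgoal_tac "snd x \<oplus> snd y \<ominus> (fst x \<oplus> fst y) = (snd x \<ominus> fst x) \<oplus> (snd y \<ominus> fst y)")
       apply (simp add: I.a_closed)
      by algebra
  next
    show "\<zero>\<^bsub>R\<^esub> \<in> carrier R" unfolding R_carrier by (simp add: I.Icarr) (metis I.additive_subgroup_axioms additive_subgroup.zero_closed r_neg zero_closed a_minus_def)
  next
    fix x y z assume "x \<in> carrier R" "y \<in> carrier R" "z \<in> carrier R"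
    then show "(x \<oplus>\<^bsub>R\<^esub> y) \<oplus>\<^bsub>R\<^esub> z = x \<oplus>\<^bsub>R\<^esub> (y \<oplus>\<^bsub>R\<^esub> z)"
      unfolding R_carrier by (simp add: a_assoc)
  next
    fix x y assume "x \<in> carrier R" "y \<in> carrier R"
    then show "x \<oplus>\<^bsub>R\<^esub> y = y \<oplus>\<^bsub>R\<^esub> x" unfolding R_carrier by (simp add: a_comm)
  next
    fix x assume "x \<in> carrier R"
    then show "\<zero>\<^bsub>R\<^esub> \<oplus>\<^bsub>R\<^esub> x = x" unfolding R_carrier by simp
  next
    fix x assume x: "x \<in> carrier R"
    show "\<exists>y\<in>carrier R. y \<oplus>\<^bsub>R\<^esub> x = \<zero>\<^bsub>R\<^esub>"
    proof (rule bexI[of _ "(\<ominus> fst x, \<ominus> snd x)"])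
      show "(\<ominus> fst x, \<ominus> snd x) \<oplus>\<^bsub>R\<^esub> x = \<zero>\<^bsub>R\<^esub>" using x unfolding R_carrier by (simp add: l_neg)
      have "\<ominus> snd x \<ominus> \<ominus> fst x = \<ominus> (snd x \<ominus> fst x)" using x unfolding R_carrier by algebra
      then show "(\<ominus> fst x, \<ominus> snd x) \<in> carrier R" using x unfolding R_carrier
        by (simp add: I.a_inv_closed)
    qed
  qed
next
  interpret I: ideal I A by (rule I_ideal)
  show "comm_monoid R"
  proof (rule comm_monoidI)
    fix x y assume "x \<in> carrier R" "y \<in> carrier R"
    then show "x \<otimes>\<^bsub>R\<^esub> y \<in> carrier R" unfolding R_carrier
      apply simp
      apply (subgoal_tac "snd x \<otimes> snd y \<ominus> (fst x \<otimes> fst y) = (snd x \<ominus> fst x) \<otimes> snd y \<oplus> fst x \<otimes> (snd y \<ominus> fst y)")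
       apply (simp add: I.a_closed I.I_r_closed I.I_l_closed)
      by algebra
  next
    show "\<one>\<^bsub>R\<^esub> \<in> carrier R" unfolding R_carrier by (simp add: I.Icarr) (metis I.additive_subgroup_axioms additive_subgroup.zero_closed r_neg one_closed a_minus_def)
  next
    fix x y z assume "x \<in> carrier R" "y \<in> carrier R" "z \<in> carrier R"
    then show "(x \<otimes>\<^bsub>R\<^esub> y) \<otimes>\<^bsub>R\<^esub> z = x \<otimes>\<^bsub>R\<^esub> (y \<otimes>\<^bsub>R\<^esub> z)"
      unfolding R_carrier by (simp add: m_assoc)
  next
    fix x assume "x \<in> carrier R"
    then show "\<one>\<^bsub>R\<^esub> \<otimes>\<^bsub>R\<^esub> x = x" unfolding R_carrier by simp
  next
    fix x y assume "x \<in> carrier R" "y \<in> carrier R"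
    then show "x \<otimes>\<^bsub>R\<^esub> y = y \<otimes>\<^bsub>R\<^esub> x" unfolding R_carrier by (simp add: m_comm)
  qed
next
  fix x y z assume "x \<in> carrier R" "y \<in> carrier R" "z \<in> carrier R"
  then show "(x \<oplus>\<^bsub>R\<^esub> y) \<otimes>\<^bsub>R\<^esub> z = x \<otimes>\<^bsub>R\<^esub> z \<oplus>\<^bsub>R\<^esub> y \<otimes>\<^bsub>R\<^esub> z"
    unfolding R_carrier by (simp add: l_distr)
qed

end



locale dup = loc A m + amal A I for A (structure) and m and I +
  assumes I_proper: "I \<noteq> carrier A"
begin

lemma I_m: "I \<subseteq> m" using proper_ideal_sub_m[OF I_ideal I_proper] .

lemma Ic: "i \<in> I \<Longrightarrow> i \<in> carrier A" using I_sub by blast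

lemma Rc: "z \<in> carrier R \<Longrightarrow> fst z \<in> carrier A" "z \<in> carrier R \<Longrightarrow> snd z \<in> carrier A"
  "z \<in> carrier R \<Longrightarrow> snd z \<ominus> fst z \<in> I"
  using R_carrier by blast+

lemma reg_R_intro:
  assumes z: "(x, y) \<in> carrier R" and rx: "regular_elem A x" and ry: "regular_elem A y"
  shows "regular_elem R (x, y)"
  unfolding regular_iff
proof (intro conjI ballI impI)
  show "(x, y) \<in> carrier R" by fact
  fix w assume w: "w \<in> carrier R" "(x, y) \<otimes>\<^bsub>R\<^esub> w = \<zero>\<^bsub>R\<^esub>"
  have "x \<otimes> fst w = \<zero>" "y \<otimes> snd w = \<zero>" using w by auto
  moreover have "fst w \<in> carrier A" "snd w \<in> carrier A" using w(1) R_carrier by auto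
  ultimately have "fst w = \<zero>" "snd w = \<zero>" using rx ry unfolding regular_iff by blast+
  then show "w = \<zero>\<^bsub>R\<^esub>" by (simp add: prod_eq_iff)
qed

lemma reg_R_fst:
  assumes z: "regular_elem R z"
  shows "regular_elem A (fst z)"
proof -
  have zc: "z \<in> carrier R" and zr: "\<And>w. w \<in> carrier R \<Longrightarrow> z \<otimes>\<^bsub>R\<^esub> w = \<zero>\<^bsub>R\<^esub> \<Longrightarrow> w = \<zero>\<^bsub>R\<^esub>"
    using z unfolding regular_iff by blast+
  obtain b b' where zb: "z = (b, b')" by (cases z)
  have bc: "b \<in> carrier A" "b' \<in> carrier A" "b' \<ominus> b \<in> I" using zc zb R_carrier by auto
  define i where "i = b' \<ominus> b"
  have ic: "i \<in> I" "i \<in> carrier A" using bc i_def Ic by auto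
  have b': "b' = b \<oplus> i" using bc unfolding i_def by algebra
  show ?thesis unfolding regular_iff
  proof (intro conjI ballI impI)
    show "fst z \<in> carrier A" using zb bc by simp
    fix c assume c: "c \<in> carrier A" "fst z \<otimes> c = \<zero>"
    then have bc0: "b \<otimes> c = \<zero>" using zb by simp
    show "c = \<zero>"
    proof (cases "i \<otimes> c = \<zero>")
      case True
      have wc: "(c, c) \<in> carrier R" using c unfolding R_carrier_pair
        by (simp add: additive_subgroup.zero_closed ideal.axioms(1)[OF I_ideal] minus_eq r_neg)
      have "b' \<otimes> c = \<zero>" using b' bc0 True c bc ic by (simp add: l_distr)
      then have "z \<otimes>\<^bsub>R\<^esub> (c, c) = \<zero>\<^bsub>R\<^esub>" using zb bc0 by simp
      then show ?thesis using zr[OF wc] by simp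
    next
      case False
      have icI: "i \<otimes> c \<in> I" using ideal.I_r_closed[OF I_ideal ic(1) c(1)] .
      have wc: "(i \<otimes> c, \<zero>) \<in> carrier R" unfolding R_carrier_pair
      proof (intro conjI)
        show "\<zero> \<ominus> i \<otimes> c \<in> I" using icI ic c
          by (simp add: minus_eq additive_subgroup.a_inv_closed ideal.axioms(1)[OF I_ideal])
      qed (use ic c in auto)
      have "b \<otimes> (i \<otimes> c) = i \<otimes> (b \<otimes> c)" using bc ic c by (simp add: m_lcomm)
      then have "z \<otimes>\<^bsub>R\<^esub> (i \<otimes> c, \<zero>) = \<zero>\<^bsub>R\<^esub>" using zb bc0 bc ic by simp
      then have "i \<otimes> c = \<zero>" using zr[OF wc] by simp
      then show ?thesis using False by simp
    qed
  qed
qed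

lemma unit_R:
  assumes z: "z \<in> carrier R" and u: "fst z \<in> Units A"
  shows "z \<in> Units R"
proof -
  obtain c d where zc: "z = (c, d)" by (cases z)
  have cd: "c \<in> carrier A" "d \<in> carrier A" "d \<ominus> c \<in> I" using z zc R_carrier by auto
  have cu: "c \<in> Units A" using u zc by simp
  have du: "d \<in> Units A"
  proof (rule notin_m_unit[OF cd(2)])
    show "d \<notin> m"
    proof
      assume "d \<in> m"
      moreover have "d \<ominus> c \<in> m" using cd I_m by blast
      ultimately have "d \<ominus> (d \<ominus> c) \<in> m" using m_ideal
        by (simp add: minus_eq additive_subgroup.a_closed additive_subgroup.a_inv_closed ideal.axioms(1))
      moreover have "d \<ominus> (d \<ominus> c) = c" using cd by algebra
      ultimately show False using unit_notin_m[OF cu] by simp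
    qed
  qed
  define ic where "ic = inv c"
  define id where "id = inv d"
  have inv: "ic \<in> carrier A" "id \<in> carrier A" "c \<otimes> ic = \<one>" "d \<otimes> id = \<one>"
    using cu du unfolding ic_def id_def by auto
  have "id \<ominus> ic = \<ominus> (ic \<otimes> id \<otimes> (d \<ominus> c))"
  proof -
    have "ic \<otimes> id \<otimes> (d \<ominus> c) = ic \<otimes> (d \<otimes> id) \<ominus> id \<otimes> (c \<otimes> ic)" using inv(1,2) cd(1,2) by algebra
    also have "\<dots> = ic \<ominus> id" by (simp only: inv(3,4)) (simp add: inv(1,2))
    finally have F: "ic \<otimes> id \<otimes> (d \<ominus> c) = ic \<ominus> id" .
    have "id \<ominus> ic = \<ominus> (ic \<ominus> id)" using inv by algebra
    then show ?thesis using F by simp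
  qed
  moreover have "ic \<otimes> id \<otimes> (d \<ominus> c) \<in> I" using ideal.I_l_closed[OF I_ideal cd(3)] inv by simp
  ultimately have "id \<ominus> ic \<in> I" by (simp add: additive_subgroup.a_inv_closed ideal.axioms(1)[OF I_ideal])
  then have wc: "(ic, id) \<in> carrier R" using inv R_carrier_pair by simp
  have "(ic, id) \<otimes>\<^bsub>R\<^esub> z = \<one>\<^bsub>R\<^esub>" "z \<otimes>\<^bsub>R\<^esub> (ic, id) = \<one>\<^bsub>R\<^esub>"
    using zc inv cd by (simp_all add: m_comm)
  then show ?thesis using wc z unfolding Units_def by blast
qed

lemma fst_finsum:
  assumes F: "finite F" and f: "f \<in> F \<rightarrow> carrier R"
  shows "fst (finsum R f F) = finsum A (fst \<circ> f) F"
  using F f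
proof (induction F rule: finite_induct)
  case empty
  interpret Rr: cring R by (rule R_cring)
  show ?case by simp
next
  case (insert a F)
  interpret Rr: cring R by (rule R_cring)
  have fc: "f \<in> F \<rightarrow> carrier R" "f a \<in> carrier R" using insert.prems by auto
  have fc': "fst \<circ> f \<in> F \<rightarrow> carrier A" "fst (f a) \<in> carrier A"
    using Rc(1)[OF funcset_mem[OF fc(1)]] Rc(1)[OF fc(2)] by auto
  have "finsum R f (insert a F) = f a \<oplus>\<^bsub>R\<^esub> finsum R f F"
    using insert fc by (simp add: Rr.finsum_insert)
  moreover have "finsum A (fst \<circ> f) (insert a F) = fst (f a) \<oplus> finsum A (fst \<circ> f) F"
    using insert fc' by (simp add: finsum_insert)
  ultimately show ?case using insert fc by (simp add: comp_def)
qed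

lemma local_R:
  assumes f: "f \<in> {..<n} \<rightarrow> carrier R" and S: "finsum R f {..<(n::nat)} = \<one>\<^bsub>R\<^esub>"
  shows "\<exists>k<n. f k \<in> Units R"
proof -
  have "finsum A (fst \<circ> f) {..<n} = \<one>" using fst_finsum[OF _ f] S by simp
  moreover have "fst \<circ> f \<in> {..<n} \<rightarrow> carrier A" using Rc(1)[OF funcset_mem[OF f]] by auto
  ultimately obtain k where "k < n" "(fst \<circ> f) k \<in> Units A" using local_finsum by blast
  moreover have "f k \<in> carrier R" using f \<open>k < n\<close> by auto
  ultimately show ?thesis using unit_R[of "f k"] by auto
qed

end



context dup
begin

lemma reg_A_unit_mult:
  assumes g: "regular_elem A g" and u: "u \<in> Units A"
  shows "regular_elem A (g \<otimes> u)"
proof -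
  have gc: "g \<in> carrier A" using g by (simp add: regular_iff)
  have uc: "u \<in> carrier A" "inv u \<in> carrier A" "inv u \<otimes> u = \<one>" using u by auto
  show ?thesis unfolding regular_iff
  proof (intro conjI ballI impI)
    show "g \<otimes> u \<in> carrier A" using gc uc by simp
    fix c assume c: "c \<in> carrier A" "g \<otimes> u \<otimes> c = \<zero>"
    then have "g \<otimes> (u \<otimes> c) = \<zero>" using gc uc by (simp add: m_assoc)
    then have "u \<otimes> c = \<zero>" using g c uc unfolding regular_iff by simp
    then have "inv u \<otimes> (u \<otimes> c) = \<zero>" using uc by simp
    then show "c = \<zero>" using uc c by (simp add: m_assoc[symmetric])
  qed
qed

lemma diag_carrier: "y \<in> carrier A \<Longrightarrow> (y, y) \<in> carrier R"
  unfolding R_carrier_pair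
  by (simp add: additive_subgroup.zero_closed ideal.axioms(1)[OF I_ideal] minus_eq r_neg)

lemma fstJ_ideal:
  assumes J: "ideal J R"
  shows "ideal (fst ` J) A"
proof -
  interpret Rr: cring R by (rule R_cring)
  have Jc: "\<And>z. z \<in> J \<Longrightarrow> z \<in> carrier R" using ideal.Icarr[OF J] .
  show ?thesis
  proof (rule idealI2)
    show "fst ` J \<subseteq> carrier A" using Jc Rc(1) by blast
    have "\<zero>\<^bsub>R\<^esub> \<in> J" using additive_subgroup.zero_closed[OF ideal.axioms(1)[OF J]] .
    then show "\<zero> \<in> fst ` J" by force
  next
    fix x y assume "x \<in> fst ` J" "y \<in> fst ` J"
    then obtain z w where zw: "z \<in> J" "w \<in> J" "x = fst z" "y = fst w" by blast
    have "z \<oplus>\<^bsub>R\<^esub> w \<in> J" using additive_subgroup.a_closed[OF ideal.axioms(1)[OF J] zw(1,2)] .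
    then show "x \<oplus> y \<in> fst ` J" using zw by force
  next
    fix x y assume x: "x \<in> fst ` J" and y: "y \<in> carrier A"
    then obtain z where z: "z \<in> J" "x = fst z" by blast
    have yy: "(y, y) \<in> carrier R" using y unfolding R_carrier_pair
      by (simp add: additive_subgroup.zero_closed ideal.axioms(1)[OF I_ideal] minus_eq r_neg)
    have "(y, y) \<otimes>\<^bsub>R\<^esub> z \<in> J" using ideal.I_l_closed[OF J z(1) yy] .
    then show "y \<otimes> x \<in> fst ` J" using z by force
  qed
qed

lemma backward:
  assumes P: "pruefer_ring A" and H: "\<forall>a \<in> m - zero_divisors A. I = ideal_smult A a I"
  shows "pruefer_ring R"
  unfolding pruefer_ring_def
proof (intro conjI allI impI)
  show cR: "cring R" by (rule R_cring)
  interpret Rr: cring R by (rule R_cring)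
  fix J assume JJ: "ideal J R \<and> fin_gen_ideal R J \<and> regular_ideal R J"
  then have J: "ideal J R" and fg: "fin_gen_ideal R J" and rg: "regular_ideal R J" by auto
  obtain S where S: "finite S" "S \<subseteq> carrier R" "J = Idl\<^bsub>R\<^esub> S" using fg unfolding fin_gen_ideal_def by blast
  obtain b where b: "b \<in> J" "regular_elem R b" using rg unfolding regular_ideal_def by blast
  have Jc: "\<And>z. z \<in> J \<Longrightarrow> z \<in> carrier R" using ideal.Icarr[OF J] .
  define J1 where "J1 = fst ` J"
  have J1: "ideal J1 A" unfolding J1_def by (rule fstJ_ideal[OF J])
  have fSc: "fst ` S \<subseteq> carrier A" using S(2) Rc(1) by blast
  have "J1 = Idl (fst ` S)"
  proof
    have "ideal {z \<in> carrier R. fst z \<in> Idl (fst ` S)} R"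
    proof (rule Rr.idealI2)
      show "{z \<in> carrier R. fst z \<in> Idl (fst ` S)} \<subseteq> carrier R" by blast
      show "\<zero>\<^bsub>R\<^esub> \<in> {z \<in> carrier R. fst z \<in> Idl (fst ` S)}"
        using genideal_ideal[OF fSc] diag_carrier[of "\<zero>"] by (simp add: additive_subgroup.zero_closed ideal.axioms(1))
    next
      fix x y assume "x \<in> {z \<in> carrier R. fst z \<in> Idl (fst ` S)}" "y \<in> {z \<in> carrier R. fst z \<in> Idl (fst ` S)}"
      moreover have "x \<oplus>\<^bsub>R\<^esub> y \<in> carrier R" using calculation Rr.a_closed by blast
      ultimately show "x \<oplus>\<^bsub>R\<^esub> y \<in> {z \<in> carrier R. fst z \<in> Idl (fst ` S)}"
        using genideal_ideal[OF fSc] by (simp add: additive_subgroup.a_closed ideal.axioms(1))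
    next
      fix x y assume x: "x \<in> {z \<in> carrier R. fst z \<in> Idl (fst ` S)}" and y: "y \<in> carrier R"
      have "fst y \<otimes> fst x \<in> Idl (fst ` S)"
        using ideal.I_l_closed[OF genideal_ideal[OF fSc]] x Rc(1)[OF y] by blast
      moreover have "y \<otimes>\<^bsub>R\<^esub> x \<in> carrier R" using x y Rr.m_closed by blast
      ultimately show "y \<otimes>\<^bsub>R\<^esub> x \<in> {z \<in> carrier R. fst z \<in> Idl (fst ` S)}" by simp
    qed
    moreover have "S \<subseteq> {z \<in> carrier R. fst z \<in> Idl (fst ` S)}"
      using S(2) genideal_self[OF fSc] by blast
    ultimately have "J \<subseteq> {z \<in> carrier R. fst z \<in> Idl (fst ` S)}"
      using Rr.genideal_minimal S(3) by blast
    then show "J1 \<subseteq> Idl (fst ` S)" unfolding J1_def by blast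
  next
    have "S \<subseteq> J" using Rr.genideal_self[OF S(2)] S(3) by blast
    then have "fst ` S \<subseteq> J1" unfolding J1_def by blast
    then show "Idl (fst ` S) \<subseteq> J1" using genideal_minimal[OF J1] by blast
  qed
  then have fg1: "fin_gen_ideal A J1" using S fSc unfolding fin_gen_ideal_def by blast
  have rb: "regular_elem A (fst b)" using reg_R_fst[OF b(2)] .
  have rg1: "regular_ideal A J1" unfolding regular_ideal_def J1_def using b rb by blast
  obtain g where g: "g \<in> J1" "\<And>x. x \<in> J1 \<Longrightarrow> \<exists>y\<in>carrier A. x = g \<otimes> y"
    using pruefer_principal[OF P J1 fg1 rg1] by blast
  obtain z0 where z0: "z0 \<in> J" "g = fst z0" using g(1) unfolding J1_def by blast
  obtain g' where z0g: "z0 = (g, g')" using z0 by (cases z0) simp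
  have z0c: "(g, g') \<in> carrier R" using Jc[OF z0(1)] z0g by simp
  then have gc: "g \<in> carrier A" "g' \<in> carrier A" "g' \<ominus> g \<in> I" unfolding R_carrier_pair by auto
  have rgg: "regular_elem A g" unfolding regular_iff
  proof (intro conjI ballI impI)
    show "g \<in> carrier A" by fact
    fix c assume c: "c \<in> carrier A" "g \<otimes> c = \<zero>"
    obtain y where y: "y \<in> carrier A" "fst b = g \<otimes> y" using g(2) b(1) unfolding J1_def by blast
    have "fst b \<otimes> c = y \<otimes> (g \<otimes> c)" using y(1,2) gc(1) c(1) by (simp add: m_ac)
    then have "fst b \<otimes> c = \<zero>" using c y by simp
    then show "c = \<zero>" using rb c unfolding regular_iff by blast
  qed
  have E1: "\<forall>w\<in>I. \<exists>w1\<in>I. w = g \<otimes> w1"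
  proof (cases "g \<in> m")
    case True
    then have "g \<in> m - zero_divisors A" using rgg unfolding regular_elem_def by blast
    then have "I = ideal_smult A g I" using H by blast
    then show ?thesis unfolding ideal_smult_def by blast
  next
    case False
    then have gu: "g \<in> Units A" using notin_m_unit gc by blast
    show ?thesis
    proof
      fix w assume w: "w \<in> I"
      have "inv g \<otimes> w \<in> I" using ideal.I_l_closed[OF I_ideal w] gu by simp
      moreover have "w = g \<otimes> (inv g \<otimes> w)" using gu Ic[OF w] Units_inv_closed[OF gu] Units_closed[OF gu] by (simp add: m_assoc[symmetric])
      ultimately show "\<exists>w1\<in>I. w = g \<otimes> w1" by blast
    qed
  qed
  obtain t1 where t1: "t1 \<in> I" "g' \<ominus> g = g \<otimes> t1" using E1 gc(3) by blast
  have t1c: "t1 \<in> carrier A" using Ic[OF t1(1)] .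
  define u where "u = \<one> \<oplus> t1"
  have uc: "u \<in> carrier A" unfolding u_def using t1c by simp
  have uu: "u \<in> Units A"
  proof (rule notin_m_unit[OF uc])
    show "u \<notin> m"
    proof
      assume "u \<in> m"
      moreover have "t1 \<in> m" using t1 I_m by blast
      ultimately have "u \<ominus> t1 \<in> m" using m_ideal
        by (simp add: minus_eq additive_subgroup.a_closed additive_subgroup.a_inv_closed ideal.axioms(1))
      moreover have "u \<ominus> t1 = \<one>" unfolding u_def using t1c by algebra
      ultimately show False using one_notin_m by simp
    qed
  qed
  have g'u: "g' = g \<otimes> u"
  proof -
    have "g' = g \<oplus> (g' \<ominus> g)" using gc by algebra
    also have "\<dots> = g \<oplus> g \<otimes> t1" using t1 by simp
    also have "\<dots> = g \<otimes> u" unfolding u_def using gc t1c by algebra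
    finally show ?thesis .
  qed
  have rgg': "regular_elem A g'" using reg_A_unit_mult[OF rgg uu] g'u by simp
  have z0r: "regular_elem R z0" using reg_R_intro[OF z0c rgg rgg'] z0g by simp
  have gen: "\<And>z. z \<in> J \<Longrightarrow> \<exists>y \<in> carrier R. z = z0 \<otimes>\<^bsub>R\<^esub> y"
  proof -
    fix z assume zJ: "z \<in> J"
    obtain x x' where zx: "z = (x, x')" by (cases z)
    have xc: "x \<in> carrier A" "x' \<in> carrier A" "x' \<ominus> x \<in> I" using Jc[OF zJ] zx R_carrier_pair by auto
    have "x \<in> J1" unfolding J1_def using zJ zx by force
    then obtain y where y: "y \<in> carrier A" "x = g \<otimes> y" using g(2) by blast
    have "x' \<ominus> g' \<otimes> y = (x' \<ominus> x) \<ominus> (g' \<ominus> g) \<otimes> y" using xc gc y by algebra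
    moreover have "(g' \<ominus> g) \<otimes> y \<in> I" using ideal.I_r_closed[OF I_ideal gc(3) y(1)] .
    ultimately have dI: "x' \<ominus> g' \<otimes> y \<in> I" using xc
      by (simp add: minus_eq additive_subgroup.a_closed additive_subgroup.a_inv_closed ideal.axioms(1)[OF I_ideal])
    then obtain w1 where w1: "w1 \<in> I" "x' \<ominus> g' \<otimes> y = g \<otimes> w1" using E1 by blast
    have w1c: "w1 \<in> carrier A" using Ic[OF w1(1)] .
    have uic: "inv u \<in> carrier A" "u \<otimes> inv u = \<one>" using uu by auto
    define v where "v = inv u \<otimes> w1"
    have vI: "v \<in> I" unfolding v_def using ideal.I_l_closed[OF I_ideal w1(1) uic(1)] .
    have vc: "v \<in> carrier A" using Ic[OF vI] .
    have "g \<otimes> w1 = g' \<otimes> v"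
    proof -
      have "g' \<otimes> v = g \<otimes> ((u \<otimes> inv u) \<otimes> w1)" unfolding g'u v_def using gc uc uic w1c by (simp add: m_ac)
      then show ?thesis using uic w1c by simp
    qed
    note gw = this
    have "x' = (x' \<ominus> g' \<otimes> y) \<oplus> g' \<otimes> y" using xc(2) gc(2) y(1) by algebra
    also have "\<dots> = g' \<otimes> v \<oplus> g' \<otimes> y" using w1(2) gw by simp
    also have "\<dots> = g' \<otimes> (y \<oplus> v)" using gc(2) y(1) vc by algebra
    finally have x'eq: "x' = g' \<otimes> (y \<oplus> v)" .
    have yc: "(y, y \<oplus> v) \<in> carrier R" unfolding R_carrier_pair using y vc vI
    proof -
      have "y \<oplus> v \<ominus> y = v" using y vc by algebra
      then show "y \<in> carrier A \<and> y \<oplus> v \<in> carrier A \<and> y \<oplus> v \<ominus> y \<in> I" using y vc vI by simp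
    qed
    have "z = z0 \<otimes>\<^bsub>R\<^esub> (y, y \<oplus> v)" using zx z0g y(2) x'eq by simp
    then show "\<exists>y \<in> carrier R. z = z0 \<otimes>\<^bsub>R\<^esub> y" using yc by blast
  qed
  show "invertible_ideal R J" using Rr.principal_invertible[OF J z0(1) z0r gen] .
qed

end



context dup
begin

lemma R_invertible_principal:
  assumes P: "pruefer_ring R" and J: "ideal J R" "fin_gen_ideal R J" "regular_ideal R J"
  shows "\<exists>g \<in> J. \<forall>x \<in> J. \<exists>y \<in> carrier R. x = g \<otimes>\<^bsub>R\<^esub> y"
proof -
  interpret Rr: cring R by (rule R_cring)
  have "invertible_ideal R J" using P J unfolding pruefer_ring_def by blast
  then show ?thesis using Rr.invertible_principal local_R by blast
qed

lemma forward1: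
  assumes P: "pruefer_ring R"
  shows "pruefer_ring A"
  unfolding pruefer_ring_def
proof (intro conjI allI impI)
  show "cring A" by (rule is_cring)
  interpret Rr: cring R by (rule R_cring)
  fix J assume JJ: "ideal J A \<and> fin_gen_ideal A J \<and> regular_ideal A J"
  then have J: "ideal J A" and fg: "fin_gen_ideal A J" and rg: "regular_ideal A J" by auto
  obtain S where S: "finite S" "S \<subseteq> carrier A" "J = Idl S" using fg unfolding fin_gen_ideal_def by blast
  obtain r where r: "r \<in> J" "regular_elem A r" using rg unfolding regular_ideal_def by blast
  have Jc: "\<And>z. z \<in> J \<Longrightarrow> z \<in> carrier A" using ideal.Icarr[OF J] .
  define D where "D = (\<lambda>s. (s, s)) ` S"
  have Dc: "D \<subseteq> carrier R" unfolding D_def using S(2) diag_carrier by blast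
  define J' where "J' = Idl\<^bsub>R\<^esub> D"
  have J': "ideal J' R" unfolding J'_def by (rule Rr.genideal_ideal[OF Dc])
  have fg': "fin_gen_ideal R J'" unfolding fin_gen_ideal_def J'_def using Dc S(1) D_def by blast
  have K: "ideal {x \<in> carrier A. (x, x) \<in> J'} A"
  proof (rule idealI2)
    show "{x \<in> carrier A. (x, x) \<in> J'} \<subseteq> carrier A" by blast
    show "\<zero> \<in> {x \<in> carrier A. (x, x) \<in> J'}"
      using additive_subgroup.zero_closed[OF ideal.axioms(1)[OF J']] by simp
  next
    fix x y assume "x \<in> {x \<in> carrier A. (x, x) \<in> J'}" "y \<in> {x \<in> carrier A. (x, x) \<in> J'}"
    then have "(x, x) \<oplus>\<^bsub>R\<^esub> (y, y) \<in> J'" "x \<in> carrier A" "y \<in> carrier A"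
      using additive_subgroup.a_closed[OF ideal.axioms(1)[OF J']] by auto
    then show "x \<oplus> y \<in> {x \<in> carrier A. (x, x) \<in> J'}" by simp
  next
    fix x y assume x: "x \<in> {x \<in> carrier A. (x, x) \<in> J'}" and y: "y \<in> carrier A"
    have "(y, y) \<otimes>\<^bsub>R\<^esub> (x, x) \<in> J'" using ideal.I_l_closed[OF J'] x diag_carrier[OF y] by blast
    then show "y \<otimes> x \<in> {x \<in> carrier A. (x, x) \<in> J'}" using x y by simp
  qed
  have "S \<subseteq> {x \<in> carrier A. (x, x) \<in> J'}"
    using S(2) Rr.genideal_self[OF Dc] unfolding J'_def D_def by blast
  then have JK: "J \<subseteq> {x \<in> carrier A. (x, x) \<in> J'}" using genideal_minimal[OF K] S(3) by blast
  have rr: "regular_elem R (r, r)" using reg_R_intro[OF diag_carrier[OF Jc[OF r(1)]] r(2) r(2)] .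
  have rg': "regular_ideal R J'" unfolding regular_ideal_def using rr JK r(1) by blast
  obtain z0 where z0: "z0 \<in> J'" "\<And>x. x \<in> J' \<Longrightarrow> \<exists>y\<in>carrier R. x = z0 \<otimes>\<^bsub>R\<^esub> y"
    using R_invertible_principal[OF P J' fg' rg'] by blast
  have L: "ideal {z \<in> carrier R. fst z \<in> J} R"
  proof (rule Rr.idealI2)
    show "{z \<in> carrier R. fst z \<in> J} \<subseteq> carrier R" by blast
    show "\<zero>\<^bsub>R\<^esub> \<in> {z \<in> carrier R. fst z \<in> J}"
      using additive_subgroup.zero_closed[OF ideal.axioms(1)[OF J]] diag_carrier[of "\<zero>"] by simp
  next
    fix x y assume xy: "x \<in> {z \<in> carrier R. fst z \<in> J}" "y \<in> {z \<in> carrier R. fst z \<in> J}"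
    then have "fst x \<oplus> fst y \<in> J" using additive_subgroup.a_closed[OF ideal.axioms(1)[OF J]] by blast
    moreover have "x \<oplus>\<^bsub>R\<^esub> y \<in> carrier R" using xy Rr.a_closed by blast
    ultimately show "x \<oplus>\<^bsub>R\<^esub> y \<in> {z \<in> carrier R. fst z \<in> J}" by simp
  next
    fix x y assume x: "x \<in> {z \<in> carrier R. fst z \<in> J}" and y: "y \<in> carrier R"
    have "fst y \<otimes> fst x \<in> J" using ideal.I_l_closed[OF J] x Rc(1)[OF y] by blast
    moreover have "y \<otimes>\<^bsub>R\<^esub> x \<in> carrier R" using x y Rr.m_closed by blast
    ultimately show "y \<otimes>\<^bsub>R\<^esub> x \<in> {z \<in> carrier R. fst z \<in> J}" by simp
  qed
  have "D \<subseteq> {z \<in> carrier R. fst z \<in> J}"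
    unfolding D_def using S(2,3) Dc genideal_self[OF S(2)] unfolding D_def by auto
  then have "J' \<subseteq> {z \<in> carrier R. fst z \<in> J}" unfolding J'_def using Rr.genideal_minimal[OF L] by blast
  then have gJ: "fst z0 \<in> J" using z0(1) by blast
  have gen: "\<And>x. x \<in> J \<Longrightarrow> \<exists>y\<in>carrier A. x = fst z0 \<otimes> y"
  proof -
    fix x assume x: "x \<in> J"
    then have "(x, x) \<in> J'" using JK by blast
    then obtain y where y: "y \<in> carrier R" "(x, x) = z0 \<otimes>\<^bsub>R\<^esub> y" using z0(2) by blast
    then have "x = fst z0 \<otimes> fst y" by simp
    then show "\<exists>y\<in>carrier A. x = fst z0 \<otimes> y" using Rc(1)[OF y(1)] by blast
  qed
  have gc: "fst z0 \<in> carrier A" using Jc[OF gJ] .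
  have rg0: "regular_elem A (fst z0)" unfolding regular_iff
  proof (intro conjI ballI impI)
    show "fst z0 \<in> carrier A" by fact
    fix c assume c: "c \<in> carrier A" "fst z0 \<otimes> c = \<zero>"
    obtain y where y: "y \<in> carrier A" "r = fst z0 \<otimes> y" using gen r(1) by blast
    have "r \<otimes> c = y \<otimes> (fst z0 \<otimes> c)" using y(1,2) gc c(1) by (simp add: m_ac)
    then have "r \<otimes> c = \<zero>" using c y by simp
    then show "c = \<zero>" using r(2) c unfolding regular_iff by blast
  qed
  show "invertible_ideal A J" using principal_invertible[OF J gJ rg0 gen] .
qed

end



context dup
begin

lemma forward2:
  assumes P: "pruefer_ring R" and a: "a \<in> m - zero_divisors A"
  shows "I = ideal_smult A a I"
proof -
  interpret Rr: cring R by (rule R_cring)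
  have ac: "a \<in> carrier A" using a m_carrier by blast
  have ra: "regular_elem A a" using a ac unfolding regular_elem_def by blast
  have "I \<subseteq> ideal_smult A a I"
  proof
    fix i assume iI: "i \<in> I"
    have ic: "i \<in> carrier A" using Ic[OF iI] .
    have ai: "(a, a) \<in> carrier R" using diag_carrier[OF ac] .
    have "i \<ominus> \<zero> = i" using ic by algebra
    then have zi: "(\<zero>, i) \<in> carrier R" unfolding R_carrier_pair using ic iI by simp
    define G where "G = {(a, a), (\<zero>, i)}"
    have Gc: "G \<subseteq> carrier R" unfolding G_def using ai zi by blast
    define J where "J = Idl\<^bsub>R\<^esub> G"
    have J: "ideal J R" unfolding J_def by (rule Rr.genideal_ideal[OF Gc])
    have GJ: "G \<subseteq> J" unfolding J_def using Rr.genideal_self[OF Gc] .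
    have "finite G" unfolding G_def by simp
    then have fg: "fin_gen_ideal R J" unfolding fin_gen_ideal_def J_def using Gc by blast
    have raa: "regular_elem R (a, a)" using reg_R_intro[OF ai ra ra] .
    have "(a, a) \<in> J" using GJ unfolding G_def by blast
    then have rg: "regular_ideal R J" unfolding regular_ideal_def using raa by blast
    obtain z0 where z0: "z0 \<in> J" "\<And>x. x \<in> J \<Longrightarrow> \<exists>y\<in>carrier R. x = z0 \<otimes>\<^bsub>R\<^esub> y"
      using R_invertible_principal[OF P J fg rg] by blast
    define T where "T = {z \<in> carrier R. \<exists>c\<in>carrier A. \<exists>u\<in>I. \<exists>d\<in>carrier A.
                          fst z = a \<otimes> c \<and> snd z = a \<otimes> c \<oplus> a \<otimes> u \<oplus> i \<otimes> d}"
    have T: "ideal T R"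
    proof (rule Rr.idealI2)
      show "T \<subseteq> carrier R" unfolding T_def by blast
      have "fst \<zero>\<^bsub>R\<^esub> = a \<otimes> \<zero> \<and> snd \<zero>\<^bsub>R\<^esub> = a \<otimes> \<zero> \<oplus> a \<otimes> \<zero> \<oplus> i \<otimes> \<zero>" using ac ic by simp
      moreover have "\<zero> \<in> I" using additive_subgroup.zero_closed[OF ideal.axioms(1)[OF I_ideal]] .
      ultimately show "\<zero>\<^bsub>R\<^esub> \<in> T" unfolding T_def using Rr.zero_closed by blast
    next
      fix x y assume x: "x \<in> T" and y: "y \<in> T"
      obtain c1 u1 d1 where 1: "c1 \<in> carrier A" "u1 \<in> I" "d1 \<in> carrier A"
        "fst x = a \<otimes> c1" "snd x = a \<otimes> c1 \<oplus> a \<otimes> u1 \<oplus> i \<otimes> d1" using x unfolding T_def by blast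
      obtain c2 u2 d2 where 2: "c2 \<in> carrier A" "u2 \<in> I" "d2 \<in> carrier A"
        "fst y = a \<otimes> c2" "snd y = a \<otimes> c2 \<oplus> a \<otimes> u2 \<oplus> i \<otimes> d2" using y unfolding T_def by blast
      have uc: "u1 \<in> carrier A" "u2 \<in> carrier A" using 1 2 Ic by auto
      have "fst (x \<oplus>\<^bsub>R\<^esub> y) = a \<otimes> (c1 \<oplus> c2)" using 1 2 ac by (simp add: r_distr)
      moreover have "snd (x \<oplus>\<^bsub>R\<^esub> y) = a \<otimes> (c1 \<oplus> c2) \<oplus> a \<otimes> (u1 \<oplus> u2) \<oplus> i \<otimes> (d1 \<oplus> d2)"
      proof -
        have "snd (x \<oplus>\<^bsub>R\<^esub> y) = (a \<otimes> c1 \<oplus> a \<otimes> u1 \<oplus> i \<otimes> d1) \<oplus> (a \<otimes> c2 \<oplus> a \<otimes> u2 \<oplus> i \<otimes> d2)"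
          using 1 2 by simp
        also have "\<dots> = a \<otimes> (c1 \<oplus> c2) \<oplus> a \<otimes> (u1 \<oplus> u2) \<oplus> i \<otimes> (d1 \<oplus> d2)"
          using ac ic 1(1,3) 2(1,3) uc by algebra
        finally show ?thesis .
      qed
      moreover have "u1 \<oplus> u2 \<in> I" using additive_subgroup.a_closed[OF ideal.axioms(1)[OF I_ideal] 1(2) 2(2)] .
      moreover have "x \<oplus>\<^bsub>R\<^esub> y \<in> carrier R" using x y Rr.a_closed unfolding T_def by blast
      ultimately show "x \<oplus>\<^bsub>R\<^esub> y \<in> T" unfolding T_def using 1 2 by blast
    next
      fix x y assume x: "x \<in> T" and y: "y \<in> carrier R"
      obtain c u d where 1: "c \<in> carrier A" "u \<in> I" "d \<in> carrier A"
        "fst x = a \<otimes> c" "snd x = a \<otimes> c \<oplus> a \<otimes> u \<oplus> i \<otimes> d" using x unfolding T_def by blast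
      have uc: "u \<in> carrier A" using 1 Ic by auto
      define p where "p = fst y"
      define s where "s = snd y \<ominus> fst y"
      have ps: "p \<in> carrier A" "s \<in> I" "s \<in> carrier A" "snd y = p \<oplus> s"
        using Rc[OF y] Ic unfolding p_def s_def by (auto, algebra)
      have "fst (y \<otimes>\<^bsub>R\<^esub> x) = a \<otimes> (p \<otimes> c)" using 1 ac ps by (simp add: p_def m_lcomm)
      moreover have "snd (y \<otimes>\<^bsub>R\<^esub> x) = a \<otimes> (p \<otimes> c) \<oplus> a \<otimes> (s \<otimes> c \<oplus> (p \<oplus> s) \<otimes> u) \<oplus> i \<otimes> ((p \<oplus> s) \<otimes> d)"
      proof -
        have "snd (y \<otimes>\<^bsub>R\<^esub> x) = (p \<oplus> s) \<otimes> (a \<otimes> c \<oplus> a \<otimes> u \<oplus> i \<otimes> d)" using 1 ps by simp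
        also have "\<dots> = a \<otimes> (p \<otimes> c) \<oplus> a \<otimes> (s \<otimes> c \<oplus> (p \<oplus> s) \<otimes> u) \<oplus> i \<otimes> ((p \<oplus> s) \<otimes> d)"
          using ac ic 1(1,3) uc ps(1,3) by algebra
        finally show ?thesis .
      qed
      moreover have "s \<otimes> c \<oplus> (p \<oplus> s) \<otimes> u \<in> I"
        using ideal.I_r_closed[OF I_ideal ps(2) 1(1)] ideal.I_l_closed[OF I_ideal 1(2)] ps
          additive_subgroup.a_closed[OF ideal.axioms(1)[OF I_ideal]] by simp
      moreover have "y \<otimes>\<^bsub>R\<^esub> x \<in> carrier R" using x y Rr.m_closed unfolding T_def by blast
      moreover have "p \<otimes> c \<in> carrier A" "(p \<oplus> s) \<otimes> d \<in> carrier A" using ps 1 by auto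
      ultimately show "y \<otimes>\<^bsub>R\<^esub> x \<in> T" unfolding T_def by blast
    qed
    have "G \<subseteq> T"
    proof -
      have "\<zero> \<in> I" using additive_subgroup.zero_closed[OF ideal.axioms(1)[OF I_ideal]] .
      moreover have "a = a \<otimes> \<one> \<and> a = a \<otimes> \<one> \<oplus> a \<otimes> \<zero> \<oplus> i \<otimes> \<zero>" using ac ic by simp
      moreover have "\<zero> = a \<otimes> \<zero> \<and> i = a \<otimes> \<zero> \<oplus> a \<otimes> \<zero> \<oplus> i \<otimes> \<one>" using ac ic by simp
      ultimately have "(a, a) \<in> T" "(\<zero>, i) \<in> T" unfolding T_def using ai zi by force+
      then show ?thesis unfolding G_def by blast
    qed
    then have "J \<subseteq> T" unfolding J_def using Rr.genideal_minimal[OF T] by blast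
    then obtain c u d where cud: "c \<in> carrier A" "u \<in> I" "d \<in> carrier A"
        "fst z0 = a \<otimes> c" "snd z0 = a \<otimes> c \<oplus> a \<otimes> u \<oplus> i \<otimes> d" using z0(1) unfolding T_def by blast
    have uc: "u \<in> carrier A" using cud Ic by auto
    obtain f where f: "f \<in> carrier R" "(a, a) = z0 \<otimes>\<^bsub>R\<^esub> f" using z0(2) GJ G_def by blast
    obtain e where e: "e \<in> carrier R" "(\<zero>, i) = z0 \<otimes>\<^bsub>R\<^esub> e" using z0(2) GJ G_def by blast
    have fc: "fst f \<in> carrier A" using Rc(1)[OF f(1)] .
    have ec: "fst e \<in> carrier A" "snd e \<in> carrier A" "snd e \<ominus> fst e \<in> I" using Rc[OF e(1)] by auto
    have fa: "a = fst z0 \<otimes> fst f" using arg_cong[OF f(2), of fst] by simp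
    have "a \<otimes> \<one> = a" using ac by simp
    also have "\<dots> = a \<otimes> c \<otimes> fst f" using fa cud(4) by simp
    also have "\<dots> = a \<otimes> (c \<otimes> fst f)" using ac cud(1) fc by (simp add: m_assoc)
    finally have "a \<otimes> \<one> = a \<otimes> (c \<otimes> fst f)" .
    then have cf: "c \<otimes> fst f = \<one>" using regular_cancel[OF ra] cud(1) fc by simp
    have "a \<otimes> (c \<otimes> fst e) = \<zero>" using e(2) cud(4) ac cud(1) ec by (simp add: m_assoc)
    then have "c \<otimes> fst e = \<zero>" using ra cud(1) ec unfolding regular_iff by simp
    then have "fst f \<otimes> (c \<otimes> fst e) = \<zero>" using fc by simp
    then have e0: "fst e = \<zero>" using cf fc cud(1) ec by (simp add: m_assoc[symmetric] m_comm)
    define w where "w = snd e"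
    have wI: "w \<in> I" using ec(3) e0 ec(2) unfolding w_def by (simp add: minus_eq)
    have wc: "w \<in> carrier A" using Ic[OF wI] .
    have ieq: "i = (a \<otimes> c \<oplus> a \<otimes> u \<oplus> i \<otimes> d) \<otimes> w" using e(2) cud(5) unfolding w_def by simp
    have dwm: "d \<otimes> w \<in> m" using ideal.I_l_closed[OF I_ideal wI cud(3)] I_m by blast
    have vu: "\<one> \<ominus> d \<otimes> w \<in> Units A" using one_minus_m_unit[OF dwm] .
    define v where "v = \<one> \<ominus> d \<otimes> w"
    have vc: "v \<in> carrier A" "inv v \<in> carrier A" "v \<otimes> inv v = \<one>" using vu unfolding v_def by auto
    have "i \<otimes> v = a \<otimes> (c \<otimes> w \<oplus> u \<otimes> w)"
    proof -
      have "i \<otimes> v = i \<ominus> i \<otimes> d \<otimes> w" unfolding v_def using ic cud(3) wc by algebra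
      also have "\<dots> = (a \<otimes> c \<oplus> a \<otimes> u \<oplus> i \<otimes> d) \<otimes> w \<ominus> i \<otimes> d \<otimes> w" using ieq by simp
      also have "\<dots> = a \<otimes> (c \<otimes> w \<oplus> u \<otimes> w)" using ac cud(1,3) uc ic wc by algebra
      finally show ?thesis .
    qed
    then have "i = a \<otimes> ((c \<otimes> w \<oplus> u \<otimes> w) \<otimes> inv v)"
    proof -
      assume h: "i \<otimes> v = a \<otimes> (c \<otimes> w \<oplus> u \<otimes> w)"
      have "i = (i \<otimes> v) \<otimes> inv v" using ic vc by (simp add: m_assoc)
      also have "\<dots> = a \<otimes> ((c \<otimes> w \<oplus> u \<otimes> w) \<otimes> inv v)" using h ac cud(1) uc wc vc by (simp add: m_assoc)
      finally show ?thesis .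
    qed
    moreover have "(c \<otimes> w \<oplus> u \<otimes> w) \<otimes> inv v \<in> I"
    proof -
      have "c \<otimes> w \<in> I" "u \<otimes> w \<in> I" using ideal.I_l_closed[OF I_ideal wI cud(1)] ideal.I_r_closed[OF I_ideal cud(2) wc] by auto
      then have "c \<otimes> w \<oplus> u \<otimes> w \<in> I" using additive_subgroup.a_closed[OF ideal.axioms(1)[OF I_ideal]] by blast
      then show ?thesis using ideal.I_r_closed[OF I_ideal _ vc(2)] by blast
    qed
    ultimately show "i \<in> ideal_smult A a I" unfolding ideal_smult_def by blast
  qed
  moreover have "ideal_smult A a I \<subseteq> I"
    unfolding ideal_smult_def using ideal.I_l_closed[OF I_ideal _ ac] by blast
  ultimately show ?thesis by blast
qed

end

theorem corollary2p7:
  fixes A :: "('a, 'b) ring_scheme" and m I :: "'a set"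
  assumes "local_ring_max A m"
    and "ideal I A" and "I \<noteq> carrier A"
  shows "pruefer_ring (amalg_dup A I) \<longleftrightarrow>
           (pruefer_ring A \<and> (\<forall>a \<in> m - zero_divisors A. I = ideal_smult A a I))"
proof -
  have cA: "cring A" using assms(1) unfolding local_ring_max_def by blast
  have "dup A m I"
    unfolding dup_def dup_axioms_def loc_def loc_axioms_def amal_def amal_axioms_def
    using cA assms by blast
  then interpret d: dup A m I .
  show ?thesis using d.backward d.forward1 d.forward2 by blast
qed

end
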